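(* Fix $\mathcal{D}_n$ and $\hat\theta$. Let $r\in\{1,\dots,n-1\}$. Define $h_i^{mVc}=|y_i^p-\hat y^s(x_i,\hat\theta)|\,(g_i^Tg_i)^{1/2}$, $i=1,\dots,n$, let $h^{mVc}_{(1)}\le\dots\le h^{mVc}_{(n)}$ be their order statistics, set $h^{mVc}_{(n+1)}=\infty$, and assume $h^{mVc}_{(n-r)}>0$. Let $k=\min\{s:0\le s\le r,\ (r-s)h^{mVc}_{(n-s)}<\sum_{i=1}^{n-s}h^{mVc}_{(i)}\}$ and $M=\frac{1}{r-k}\sum_{i=1}^{n-k}h^{mVc}_{(i)}$. Then the probabilities $$\pi_i^{mVc}=r\frac{h_i^{mVc}\wedge M}{\sum_{j=1}^n(h_j^{mVc}\wedge M)},\quad i=1,\dots,n,$$ minimize $\mathrm{tr}(\tilde V)$ over all $(\pi_1,\dots,\pi_n)$ with $\sum_{i=1}^n\pi_i=r$ and $0<\pi_i\le1$ (i.e. Poisson subsampling with these probabilities is mVc-optimal).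
   Context: Physical data $\mathcal{D}_n=\{(x_i,y_i^p)\}_{i=1}^n$ with $x_i\in\Omega\subset\mathbb{R}^d$; $\hat y^s(x,\theta)$ is a surrogate of a computer model, differentiable in $\theta\in\Theta\subset\mathbb{R}^q$; $\hat\theta=\arg\min_{\theta\in\Theta}\frac1n\sum_{i=1}^n[y_i^p-\hat y^s(x_i,\theta)]^2$. $g_i=\nabla_\theta\hat y^s(x_i,\hat\theta)$ (column vector). For subsampling probabilities $\pi_i$, $\tilde V=\frac{4}{n^2}\sum_{i=1}^n\frac{1-\pi_i}{\pi_i}[y_i^p-\hat y^s(x_i,\hat\theta)]^2g_ig_i^T$. $a\wedge b=\min(a,b)$. *)

theory Defs
  imports "HOL-Analysis.Analysis"
begin

definition ordstat :: "nat \<Rightarrow> (nat \<Rightarrow> real) \<Rightarrow> nat \<Rightarrow> ereal" where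
  "ordstat n h j = (if 1 \<le> j \<and> j \<le> n then ereal (sort (map h [1..<n+1]) ! (j - 1)) else \<infinity>)"

definition ordsum :: "nat \<Rightarrow> (nat \<Rightarrow> real) \<Rightarrow> nat \<Rightarrow> real" where
  "ordsum n h m = (\<Sum>i=1..m. sort (map h [1..<n+1]) ! (i - 1))"

definition kidx :: "nat \<Rightarrow> nat \<Rightarrow> (nat \<Rightarrow> real) \<Rightarrow> nat" where
  "kidx n r h = (LEAST s. s \<le> r \<and>
      ereal (real (r - s)) * ordstat n h (n - s) < ereal (ordsum n h (n - s)))"

definition Mthr :: "nat \<Rightarrow> nat \<Rightarrow> (nat \<Rightarrow> real) \<Rightarrow> real" where
  "Mthr n r h = ordsum n h (n - kidx n r h) / real (r - kidx n r h)"

definition pi_mVc :: "nat \<Rightarrow> nat \<Rightarrow> (nat \<Rightarrow> real) \<Rightarrow> nat \<Rightarrow> real" where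
  "pi_mVc n r h i = real r * min (h i) (Mthr n r h) / (\<Sum>j=1..n. min (h j) (Mthr n r h))"

definition outer :: "real^'q \<Rightarrow> real^'q^'q" where
  "outer v = (\<chi> a b. v $ a * v $ b)"

definition Vtilde :: "nat \<Rightarrow> (nat \<Rightarrow> real) \<Rightarrow> (nat \<Rightarrow> real) \<Rightarrow> (nat \<Rightarrow> real^'q) \<Rightarrow> real^'q^'q" where
  "Vtilde n p res g = (4 / (real n)^2) *\<^sub>R
     (\<Sum>i=1..n. ((1 - p i) / p i * (res i)^2) *\<^sub>R outer (g i))"

end

theory Submission imports Defs begin

lemma sum_shift1: fixes m :: nat and f :: "nat \<Rightarrow> real" shows "(\<Sum>i=1..m. f (i - 1)) = (\<Sum>i<m. f i)"
  by (induction m) (auto simp: atLeastLessThanSuc_atLeastAtMost[symmetric] sum.atLeastLessThan_Suc)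

lemma sum_sorted_map:
  fixes h :: "nat \<Rightarrow> real"
  shows "(\<Sum>i<n. f (sort (map h [1..<n+1]) ! i)) = (\<Sum>j=1..n. (f (h j) :: real))"
proof -
  let ?L = "sort (map h [1..<n+1])"
  have "(\<Sum>i<n. f (?L ! i)) = sum_list (map f ?L)"
    by (simp add: sum_list_sum_nth lessThan_atLeast0)
  also have "\<dots> = sum_mset (image_mset f (mset ?L))"
    by (metis mset_map sum_mset_sum_list)
  also have "\<dots> = sum_mset (image_mset f (mset (map h [1..<n+1])))" by simp
  also have "\<dots> = sum_list (map f (map h [1..<n+1]))"
    by (metis mset_map sum_mset_sum_list)
  also have "\<dots> = (\<Sum>j\<in>{1..<n+1}. f (h j))"
    by (simp only: map_map comp_def interv_sum_list_conv_sum_set_nat set_upt)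
  also have "{1..<n+1} = {1..n}" by auto
  finally show ?thesis .
qed

lemma key_threshold:
  fixes h :: "nat \<Rightarrow> real" and n r :: nat
  assumes hnn: "\<And>i. h i \<ge> 0" and r1: "1 \<le> r" and rn: "r \<le> n - 1"
    and pos: "ordstat n h (n - r) > 0"
  shows "Mthr n r h > 0 \<and> (\<Sum>j=1..n. min (h j) (Mthr n r h)) = real r * Mthr n r h"
proof -
  define L where "L = sort (map h [1..<n+1])"
  define S where "S m = (\<Sum>i<m. L ! i)" for m
  have lenL: "length L = n" by (simp add: L_def)
  have sortedL: "sorted L" by (simp add: L_def)
  have Lnn: "L ! i \<ge> 0" if "i < n" for i
  proof -
    have "L ! i \<in> set L" using that lenL by simp
    then have "L ! i \<in> set (map h [1..<n+1])" by (simp add: L_def)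
    then show ?thesis using hnn by auto
  qed
  have mono: "L ! i \<le> L ! j" if "i \<le> j" "j < n" for i j
    using sorted_nth_mono[OF sortedL that(1)] that lenL by simp
  have Snn: "S m \<ge> 0" if "m \<le> n" for m
    unfolding S_def using that Lnn by (intro sum_nonneg) auto
  have Ssuc: "S (Suc m) = S m + L ! m" for m by (simp add: S_def)
  have ordsum_eq: "ordsum n h m = S m" for m
    unfolding ordsum_def S_def L_def using sum_shift1[where m=m and f="\<lambda>i. sort (map h [1..<n+1]) ! i"] by simp
  have ordstat_eq: "ordstat n h j = ereal (L ! (j - 1))" if "1 \<le> j" "j \<le> n" for j
    using that by (simp add: ordstat_def L_def)
  have n2: "n \<ge> 2" using r1 rn by simp
  define P where "P s \<longleftrightarrow> s \<le> r \<and> ereal (real (r - s)) * ordstat n h (n - s) < ereal (ordsum n h (n - s))" for s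
  have P_iff: "P s \<longleftrightarrow> real (r - s) * L ! (n - s - 1) < S (n - s)" if "s \<le> r" for s
  proof -
    have "1 \<le> n - s" "n - s \<le> n" using that rn r1 by auto
    then show ?thesis unfolding P_def using that by (simp add: ordstat_eq ordsum_eq)
  qed
  have posL: "L ! (n - r - 1) > 0"
    using pos ordstat_eq[of "n - r"] rn r1 by simp
  have Spos_r: "S (n - r) > 0"
  proof -
    have "n - r = Suc (n - r - 1)" using rn r1 by simp
    then have "S (n - r) = S (n - r - 1) + L ! (n - r - 1)" using Ssuc by metis
    moreover have "S (n - r - 1) \<ge> 0" using Snn by simp
    ultimately show ?thesis using posL by simp
  qed
  have Pr: "P r" using P_iff[of r] Spos_r by simp
  define k where "k = (LEAST s. P s)"
  have kdef: "kidx n r h = k" unfolding kidx_def k_def P_def by simp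
  have Pk: "P k" unfolding k_def by (rule LeastI[of P r, OF Pr])
  have kr: "k \<le> r" using Pk P_def by simp
  have notP: "\<not> P s" if "s < k" for s using that unfolding k_def by (rule not_less_Least)
  have prevk: "real (r - k) * L ! (n - k) \<ge> S (n - k)" if "k \<ge> 1"
  proof -
    have "\<not> P (k - 1)" using notP that by simp
    then have "\<not> real (r - (k - 1)) * L ! (n - (k - 1) - 1) < S (n - (k - 1))"
      using P_iff[of "k - 1"] kr by simp
    moreover have "n - (k - 1) - 1 = n - k" "n - (k - 1) = Suc (n - k)" "r - (k - 1) = Suc (r - k)"
      using that kr rn by auto
    ultimately have "real (Suc (r - k)) * L ! (n - k) \<ge> S (n - k) + L ! (n - k)"
      using Ssuc by simp
    then show ?thesis by (simp add: algebra_simps)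
  qed
  have kltr: "k < r"
  proof (rule ccontr)
    assume "\<not> k < r"
    then have "k = r" using kr by simp
    then have "S (n - r) \<le> 0" using prevk r1 by simp
    then show False using Spos_r by simp
  qed
  have Pk': "real (r - k) * L ! (n - k - 1) < S (n - k)" using P_iff[of k] Pk kr by simp
  have rk: "real (r - k) > 0" using kltr by simp
  have Mdef: "Mthr n r h = S (n - k) / real (r - k)"
    unfolding Mthr_def kdef ordsum_eq ..
  define M where "M = S (n - k) / real (r - k)"
  have Lnk: "L ! (n - k - 1) \<ge> 0" using Lnn[of "n-k-1"] kr rn n2 by simp
  have Sk_pos: "S (n - k) > 0" using Pk' rk Lnk by (smt (verit) mult_nonneg_nonneg of_nat_0_le_iff)
  have Mpos: "M > 0" unfolding M_def using Sk_pos rk by simp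
  have below: "L ! (n - k - 1) < M" unfolding M_def using Pk' rk by (simp add: field_simps)
  have SkM: "S (n - k) = real (r - k) * M" unfolding M_def using rk by simp
  have above: "L ! (n - k) \<ge> M" if "k \<ge> 1"
    unfolding M_def using prevk[OF that] rk by (simp add: field_simps)
  have "(\<Sum>j=1..n. min (h j) M) = (\<Sum>i<n. min (L ! i) M)"
    using sum_sorted_map[where f="\<lambda>x. min x M" and n=n and h=h] by (simp add: L_def)
  also have "\<dots> = (\<Sum>i<n - k. min (L ! i) M) + (\<Sum>i\<in>{n - k..<n}. min (L ! i) M)"
  proof -
    have e: "{..<n} = {..<n - k} \<union> {n - k..<n}" by auto
    show ?thesis by (subst e) (rule sum.union_disjoint; auto)
  qed
  also have "(\<Sum>i<n - k. min (L ! i) M) = S (n - k)"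
    unfolding S_def
  proof (rule sum.cong)
    fix i assume "i \<in> {..<n - k}"
    then have "i \<le> n - k - 1" "n - k - 1 < n" using kr rn by auto
    then have "L ! i < M" using mono below by (meson le_less_trans)
    then show "min (L ! i) M = L ! i" by simp
  qed simp
  also have "(\<Sum>i\<in>{n - k..<n}. min (L ! i) M) = (\<Sum>i\<in>{n - k..<n}. M)"
  proof (rule sum.cong)
    fix i assume i: "i \<in> {n - k..<n}"
    then have k1: "k \<ge> 1" by auto
    have "L ! (n - k) \<le> L ! i" using i mono by simp
    then show "min (L ! i) M = M" using above[OF k1] by simp
  qed simp
  also have "(\<Sum>i\<in>{n - k..<n}. M) = real k * M" using kr rn by simp
  finally have "(\<Sum>j=1..n. min (h j) M) = real r * M"
    using SkM kr by (simp add: algebra_simps of_nat_diff)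
  then show ?thesis using Mpos Mdef M_def by simp
qed
lemma term_ineq:
  fixes h M p :: real
  assumes h: "h \<ge> 0" and M: "M > 0" and p: "0 < p" "p \<le> 1"
  shows "(1 - min h M / M) / (min h M / M) * h^2 - M^2 * (p - min h M / M) \<le> (1 - p) / p * h^2"
proof (cases "h = 0")
  case True then show ?thesis using M p by simp
next
  case False
  then have hp: "h > 0" using h by simp
  show ?thesis
  proof (cases "h < M")
    case True
    then have q: "min h M / M = h / M" by simp
    have "(1 - h/M)/(h/M) * h^2 = M*h - h^2" using hp M by (simp add: field_simps power2_eq_square)
    moreover have "(1 - p) / p * h^2 = h^2/p - h^2" using p by (simp add: field_simps)
    moreover have "h^2/p + M^2*p \<ge> 2*M*h"
    proof -
      have "0 \<le> (h - M*p)^2" by simp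
      then have "2*M*h*p \<le> h^2 + M^2*p^2" by (simp add: power2_eq_square algebra_simps)
      then show ?thesis using p by (simp add: field_simps power2_eq_square)
    qed
    moreover have "M^2*(p - h/M) = M^2*p - M*h" using M by (simp add: field_simps power2_eq_square)
    ultimately show ?thesis unfolding q by linarith
  next
    case False
    then have q: "min h M / M = 1" using M by simp
    have "M^2 \<le> h^2" using False M by (simp add: power_mono)
    then have "M^2 * (1-p) \<le> h^2 * (1-p)" using p by (simp add: mult_right_mono)
    also have "\<dots> \<le> h^2 * (1-p) / p" using p by (simp add: le_divide_eq mult_left_le)
    finally show ?thesis unfolding q by (simp add: algebra_simps)
  qed
qed
lemma trace_Vtilde: "trace (Vtilde n p res g) = 4/(real n)^2 * (\<Sum>i=1..n. (1 - p i)/p i * (res i)^2 * (g i \<bullet> g i))"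
  unfolding Vtilde_def trace_def outer_def
  apply (simp add: sum_component sum_distrib_left inner_vec_def power2_eq_square mult.assoc mult_ac)
  apply (subst sum.swap)
  apply (simp add: sum_divide_distrib mult.assoc)
  done
theorem theorem3:
  fixes n r :: nat
    and x :: "nat \<Rightarrow> real^'d"
    and yp :: "nat \<Rightarrow> real"
    and ys :: "real^'d \<Rightarrow> real^'q \<Rightarrow> real"
    and \<Theta> :: "(real^'q) set"
    and \<theta>hat :: "real^'q"
    and g :: "nat \<Rightarrow> real^'q"
    and \<Omega> :: "(real^'d) set"
  assumes x_in: "\<forall>i\<in>{1..n}. x i \<in> \<Omega>"
    and diff: "\<forall>i\<in>{1..n}. \<forall>\<theta>\<in>\<Theta>. ys (x i) differentiable (at \<theta>)"
    and theta_in: "\<theta>hat \<in> \<Theta>"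
    and theta_min: "\<forall>\<theta>\<in>\<Theta>. (1 / real n) * (\<Sum>i=1..n. (yp i - ys (x i) \<theta>hat)^2)
                        \<le> (1 / real n) * (\<Sum>i=1..n. (yp i - ys (x i) \<theta>)^2)"
    and grad: "\<forall>i\<in>{1..n}. (ys (x i) has_derivative (\<lambda>v. g i \<bullet> v)) (at \<theta>hat)"
    and r_range: "1 \<le> r" "r \<le> n - 1"
    and pos: "ordstat n (\<lambda>i. \<bar>yp i - ys (x i) \<theta>hat\<bar> * sqrt (g i \<bullet> g i)) (n - r) > 0"
  shows "let h = (\<lambda>i. \<bar>yp i - ys (x i) \<theta>hat\<bar> * sqrt (g i \<bullet> g i));
             res = (\<lambda>i. yp i - ys (x i) \<theta>hat);
             p\<^sub>o = pi_mVc n r h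
         in (\<Sum>i=1..n. p\<^sub>o i) = real r
          \<and> (\<forall>i\<in>{1..n}. 0 \<le> p\<^sub>o i \<and> p\<^sub>o i \<le> 1 \<and> (h i > 0 \<longrightarrow> p\<^sub>o i > 0))
          \<and> (\<forall>p :: nat \<Rightarrow> real. (\<Sum>i=1..n. p i) = real r \<and> (\<forall>i\<in>{1..n}. 0 < p i \<and> p i \<le> 1)
               \<longrightarrow> trace (Vtilde n p\<^sub>o res g) \<le> trace (Vtilde n p res g))"
proof -
  define h where "h = (\<lambda>i. \<bar>yp i - ys (x i) \<theta>hat\<bar> * sqrt (g i \<bullet> g i))"
  define res where "res = (\<lambda>i. yp i - ys (x i) \<theta>hat)"
  define M where "M = Mthr n r h"
  have hnn: "\<And>i. h i \<ge> 0" unfolding h_def by simp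
  have key: "M > 0 \<and> (\<Sum>j=1..n. min (h j) M) = real r * M"
    unfolding M_def by (rule key_threshold[OF hnn r_range pos[folded h_def]])
  then have Mpos: "M > 0" and sumM: "(\<Sum>j=1..n. min (h j) M) = real r * M" by auto
  have pieq: "pi_mVc n r h i = min (h i) M / M" for i
    unfolding pi_mVc_def M_def[symmetric] sumM using r_range Mpos by simp
  define q where "q i = min (h i) M / M" for i
  have sumq: "(\<Sum>i=1..n. q i) = real r"
    unfolding q_def using sumM Mpos by (simp add: sum_divide_distrib[symmetric])
  have hsq: "(res i)^2 * (g i \<bullet> g i) = (h i)^2" for i
    unfolding h_def res_def by (simp add: power_mult_distrib)
  have tr: "trace (Vtilde n p res g) = 4/(real n)^2 * (\<Sum>i=1..n. (1 - p i)/p i * (h i)^2)" for p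
    unfolding trace_Vtilde by (simp add: mult.assoc hsq)
  have opt: "trace (Vtilde n q res g) \<le> trace (Vtilde n p res g)"
    if ps: "(\<Sum>i=1..n. p i) = real r" and pb: "\<forall>i\<in>{1..n}. 0 < p i \<and> p i \<le> 1" for p
  proof -
    have "(\<Sum>i=1..n. (1 - q i)/q i * (h i)^2)
        = (\<Sum>i=1..n. (1 - q i)/q i * (h i)^2 - M^2 * (p i - q i))"
      using ps sumq by (simp add: sum_subtractf sum_distrib_left[symmetric])
    also have "\<dots> \<le> (\<Sum>i=1..n. (1 - p i)/p i * (h i)^2)"
      unfolding q_def using pb hnn Mpos by (intro sum_mono term_ineq) auto
    finally show ?thesis unfolding tr by (intro mult_left_mono) auto
  qed
  have qeq: "pi_mVc n r h = q" using pieq q_def by auto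
  show ?thesis
    unfolding Let_def h_def[symmetric] res_def[symmetric] qeq
  proof (intro conjI ballI allI impI)
    show "(\<Sum>i=1..n. q i) = real r" by (rule sumq)
  next
    fix i show "0 \<le> q i" unfolding q_def using hnn Mpos by simp
  next
    fix i show "q i \<le> 1" unfolding q_def using Mpos by simp
  next
    fix i assume "0 < h i" then show "0 < q i" unfolding q_def using Mpos by simp
  next
    fix p assume "(\<Sum>i=1..n. p i) = real r \<and> (\<forall>i\<in>{1..n}. 0 < p i \<and> p i \<le> 1)"
    then show "trace (Vtilde n q res g) \<le> trace (Vtilde n p res g)" using opt by blast
  qed
qed

end
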